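(* Let $U_n\subset C^n([a,b],\mathbb{K})$ ($\mathbb{K}=\mathbb{R}$ or $\mathbb{C}$, $a<b$) be a subspace of dimension $n+1$ with a Bernstein basis $p_{n,0},\dots,p_{n,n}$ for $\{a,b\}$. Let $f_0\in U_n$ be strictly positive and suppose $D_{f_0}U_n$ has a Bernstein basis $q_{n-1,0},\dots,q_{n-1,n-1}$ for $\{a,b\}$. Define the (non-zero) numbers $$c_k=\frac{p_{n,k}^{(k)}(a)}{f_0(a)\,q_{n-1,k-1}^{(k-1)}(a)}\ (k=1,\dots,n),\qquad d_k=\frac{p_{n,k}^{(n-k)}(b)}{f_0(b)\,q_{n-1,k}^{(n-1-k)}(b)}\ (k=0,\dots,n-1).$$ Then $$f_0(x)=\frac{f_0(a)}{p_{n,0}(a)}p_{n,0}(x)+\sum_{k=1}^n(-1)^k\frac{d_0\cdots d_{k-1}}{c_1\cdots c_k}\,\frac{f_0(a)}{p_{n,0}(a)}\,p_{n,k}(x).$$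
   Context: A function $f\in C^m([a,b],\mathbb{K})$ has a zero of order $k$ at $c$ if $f(c)=\dots=f^{(k-1)}(c)=0$ and $f^{(k)}(c)\ne0$ (one-sided derivatives at endpoints). For an $(m+1)$-dimensional space $V\subset C^m([a,b],\mathbb{K})$, a Bernstein basis for $\{a,b\}$ is a system $p_{m,0},\dots,p_{m,m}$ in $V$ such that each $p_{m,k}$ has a zero of order exactly $k$ at $a$ and of order exactly $m-k$ at $b$. For strictly positive (real-valued, $>0$ on $[a,b]$) $f_0\in U_n$, $D_{f_0}U_n:=\{\frac{d}{dx}(f/f_0):f\in U_n\}$, an $n$-dimensional subspace of $C^{n-1}([a,b],\mathbb{K})$. *)

theory Defs
  imports "HOL-Analysis.Analysis"
begin

fun hderiv :: "real set \<Rightarrow> nat \<Rightarrow> (real \<Rightarrow> 'a::real_normed_vector) \<Rightarrow> real \<Rightarrow> 'a" where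
  "hderiv S 0 f = f"
| "hderiv S (Suc k) f = (\<lambda>x. vector_derivative (hderiv S k f) (at x within S))"

definition Cm :: "nat \<Rightarrow> real \<Rightarrow> real \<Rightarrow> (real \<Rightarrow> 'a::real_normed_vector) set" where
  "Cm m a b = {f. (\<forall>k<m. \<forall>x\<in>{a..b}.
        (hderiv {a..b} k f has_vector_derivative hderiv {a..b} (Suc k) f x) (at x within {a..b}))
      \<and> continuous_on {a..b} (hderiv {a..b} m f)}"

definition fun_subspace :: "nat \<Rightarrow> real \<Rightarrow> real \<Rightarrow> (real \<Rightarrow> 'k::real_normed_field) set \<Rightarrow> bool" where
  "fun_subspace m a b V \<longleftrightarrow> V \<subseteq> Cm m a b \<and> (\<lambda>x. 0) \<in> V
     \<and> (\<forall>f\<in>V. \<forall>g\<in>V. (\<lambda>x. f x + g x) \<in> V)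
     \<and> (\<forall>c f. f \<in> V \<longrightarrow> (\<lambda>x. c * f x) \<in> V)"

definition has_dim :: "real \<Rightarrow> real \<Rightarrow> (real \<Rightarrow> 'k::real_normed_field) set \<Rightarrow> nat \<Rightarrow> bool" where
  "has_dim a b V d \<longleftrightarrow> (\<exists>e::nat \<Rightarrow> real \<Rightarrow> 'k. (\<forall>i<d. e i \<in> V)
     \<and> (\<forall>c. (\<forall>x\<in>{a..b}. (\<Sum>i<d. c i * e i x) = 0) \<longrightarrow> (\<forall>i<d. c i = 0))
     \<and> (\<forall>f\<in>V. \<exists>c. \<forall>x\<in>{a..b}. f x = (\<Sum>i<d. c i * e i x)))"

definition zero_order :: "real \<Rightarrow> real \<Rightarrow> (real \<Rightarrow> 'k::real_normed_vector) \<Rightarrow> real \<Rightarrow> nat \<Rightarrow> bool" where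
  "zero_order a b f c k \<longleftrightarrow> (\<forall>j<k. hderiv {a..b} j f c = 0) \<and> hderiv {a..b} k f c \<noteq> 0"

definition bernstein_basis :: "(real \<Rightarrow> 'k::real_normed_vector) set \<Rightarrow> nat \<Rightarrow> real \<Rightarrow> real
    \<Rightarrow> (nat \<Rightarrow> real \<Rightarrow> 'k) \<Rightarrow> bool" where
  "bernstein_basis V m a b p \<longleftrightarrow>
     (\<forall>k\<le>m. p k \<in> V \<and> zero_order a b (p k) a k \<and> zero_order a b (p k) b (m - k))"

definition Dquot :: "real \<Rightarrow> real \<Rightarrow> (real \<Rightarrow> 'k::real_normed_field) \<Rightarrow> (real \<Rightarrow> 'k) set \<Rightarrow> (real \<Rightarrow> 'k) set" where
  "Dquot a b f0 U = {hderiv {a..b} 1 (\<lambda>x. f x / f0 x) | f. f \<in> U}"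

end

theory Submission
  imports Defs
begin


lemma vd_cong:
  assumes "x \<in> S" "\<forall>y\<in>S. f y = g y"
  shows "vector_derivative f (at x within S) = vector_derivative g (at x within S)"
proof -
  have "\<And>v. (f has_vector_derivative v) (at x within S) \<longleftrightarrow> (g has_vector_derivative v) (at x within S)"
    using assms has_vector_derivative_weaken[of _ _ x S S] by (metis order_refl)
  then show ?thesis unfolding vector_derivative_def by simp
qed

lemma H_shift: "hderiv S k (hderiv S 1 g) = hderiv S (Suc k) g"
  by (induction k) auto

declare hderiv.simps(2)[simp del]
lemmas H_Suc = hderiv.simps(2)

lemma H_cong:
  assumes "\<forall>y\<in>S. f y = g y" "x \<in> S"
  shows "hderiv S k f x = hderiv S k g x"
  using assms(2)
proof (induction k arbitrary: x)
  case 0 then show ?case using assms by simp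
next
  case (Suc k) then show ?case by (simp add: vd_cong H_Suc)
qed

definition Dm :: "real \<Rightarrow> real \<Rightarrow> nat \<Rightarrow> (real \<Rightarrow> 'a::real_normed_vector) set" where
  "Dm a b m = {f. \<forall>k<m. \<forall>x\<in>{a..b}.
        (hderiv {a..b} k f has_vector_derivative hderiv {a..b} (Suc k) f x) (at x within {a..b})}"

lemma Cm_Dm: "Cm m a b \<subseteq> Dm a b m"
  unfolding Cm_def Dm_def by auto

lemma Dm_mono: "f \<in> Dm a b m \<Longrightarrow> k \<le> m \<Longrightarrow> f \<in> Dm a b k"
  unfolding Dm_def by auto

lemma Dm_Suc: "f \<in> Dm a b (Suc m) \<longleftrightarrow>
   (\<forall>x\<in>{a..b}. (f has_vector_derivative hderiv {a..b} 1 f x) (at x within {a..b}))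
   \<and> hderiv {a..b} 1 f \<in> Dm a b m"
  unfolding Dm_def mem_Collect_eq H_shift
  apply (rule iffI)
   apply (intro conjI allI impI ballI)
    apply (metis hderiv.simps(1) One_nat_def zero_less_Suc)
   apply (metis Suc_mono)
  apply (intro allI impI ballI)
  subgoal for k x by (cases k) auto
  done

lemma Dm_cong:
  assumes "f \<in> Dm a b m" "\<forall>x\<in>{a..b}. f x = g x"
  shows "g \<in> Dm a b m"
  unfolding Dm_def mem_Collect_eq
proof (intro allI impI ballI)
  fix k x assume k: "k < m" and x: "x \<in> {a..b}"
  have "(hderiv {a..b} k f has_vector_derivative hderiv {a..b} (Suc k) f x) (at x within {a..b})"
    using assms k x unfolding Dm_def by auto
  then have "(hderiv {a..b} k g has_vector_derivative hderiv {a..b} (Suc k) f x) (at x within {a..b})"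
    by (rule has_vector_derivative_weaken) (use x H_cong[OF assms(2)] in auto)
  then show "(hderiv {a..b} k g has_vector_derivative hderiv {a..b} (Suc k) g x) (at x within {a..b})"
    using H_cong[OF assms(2) x, of "Suc k"] by simp
qed

lemma vd_unique:
  assumes "a < b" "x \<in> {a..b}" "(f has_vector_derivative v) (at x within {a..b})"
  shows "hderiv {a..b} 1 f x = v"
  using vector_derivative_within_cbox[of a b x f v] assms by (simp add: H_Suc)

lemma Dm_deriv: "f \<in> Dm a b (Suc m) \<Longrightarrow> x \<in> {a..b} \<Longrightarrow> (f has_vector_derivative hderiv {a..b} 1 f x) (at x within {a..b})"
  using Dm_Suc by blast



context fixes a b :: real assumes ab: "a < b" begin

lemma H_zero: "x \<in> {a..b} \<Longrightarrow> hderiv {a..b} k (\<lambda>x. 0::'a::real_normed_vector) x = 0"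
proof (induction k arbitrary: x)
  case 0 then show ?case by simp
next
  case (Suc k)
  have "hderiv {a..b} (Suc k) (\<lambda>x. 0::'a) x = hderiv {a..b} 1 (\<lambda>x. 0::'a) x"
    unfolding H_Suc One_nat_def hderiv.simps(1) using Suc by (intro vd_cong) auto
  also have "\<dots> = 0" using vd_unique[OF ab Suc.prems, of "\<lambda>x. 0" 0] by simp
  finally show ?case .
qed

lemma Dm_zero: "(\<lambda>x. 0::'a::real_normed_vector) \<in> Dm a b m"
  unfolding Dm_def mem_Collect_eq
proof (intro allI impI ballI)
  fix k x assume x: "x \<in> {a..b}"
  have z: "\<And>k y. y \<in> {a..b} \<Longrightarrow> hderiv {a..b} k (\<lambda>x. 0::'a) y = 0" by (rule H_zero)
  have "((\<lambda>x. 0::'a) has_vector_derivative 0) (at x within {a..b})" by simp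
  then have "(hderiv {a..b} k (\<lambda>x. 0::'a) has_vector_derivative 0) (at x within {a..b})"
    by (rule has_vector_derivative_weaken) (use x z in auto)
  then show "(hderiv {a..b} k (\<lambda>x. 0::'a) has_vector_derivative hderiv {a..b} (Suc k) (\<lambda>x. 0) x) (at x within {a..b})"
    using z[OF x, of "Suc k"] by simp
qed

lemma Dm_add:
  fixes f g :: "real \<Rightarrow> 'k::real_normed_vector"
  assumes "f \<in> Dm a b m" "g \<in> Dm a b m"
  shows "(\<lambda>x. f x + g x) \<in> Dm a b m \<and>
    (\<forall>k\<le>m. \<forall>x\<in>{a..b}. hderiv {a..b} k (\<lambda>x. f x + g x) x = hderiv {a..b} k f x + hderiv {a..b} k g x)"
  using assms
proof (induction m arbitrary: f g)
  case 0
  then show ?case by (simp add: Dm_def)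
next
  case (Suc m)
  have df: "\<And>x. x \<in> {a..b} \<Longrightarrow> (f has_vector_derivative hderiv {a..b} 1 f x) (at x within {a..b})"
    and dg: "\<And>x. x \<in> {a..b} \<Longrightarrow> (g has_vector_derivative hderiv {a..b} 1 g x) (at x within {a..b})"
    using Suc.prems Dm_deriv by blast+
  have e1: "\<forall>x\<in>{a..b}. hderiv {a..b} 1 (\<lambda>x. f x + g x) x = hderiv {a..b} 1 f x + hderiv {a..b} 1 g x"
  proof
    fix x assume x: "x \<in> {a..b}"
    show "hderiv {a..b} 1 (\<lambda>x. f x + g x) x = hderiv {a..b} 1 f x + hderiv {a..b} 1 g x"
      by (rule vd_unique[OF ab x has_vector_derivative_add[OF df[OF x] dg[OF x]]])
  qed
  have IH: "(\<lambda>x. hderiv {a..b} 1 f x + hderiv {a..b} 1 g x) \<in> Dm a b m \<and>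
    (\<forall>k\<le>m. \<forall>x\<in>{a..b}. hderiv {a..b} k (\<lambda>x. hderiv {a..b} 1 f x + hderiv {a..b} 1 g x) x
       = hderiv {a..b} k (hderiv {a..b} 1 f) x + hderiv {a..b} k (hderiv {a..b} 1 g) x)"
    using Suc.IH Suc.prems Dm_Suc by blast
  have mem: "(\<lambda>x. f x + g x) \<in> Dm a b (Suc m)"
    unfolding Dm_Suc
  proof
    show "\<forall>x\<in>{a..b}. ((\<lambda>x. f x + g x) has_vector_derivative hderiv {a..b} 1 (\<lambda>x. f x + g x) x) (at x within {a..b})"
    proof
      fix x assume x: "x \<in> {a..b}"
      show "((\<lambda>x. f x + g x) has_vector_derivative hderiv {a..b} 1 (\<lambda>x. f x + g x) x) (at x within {a..b})"
        using e1 x has_vector_derivative_add[OF df[OF x] dg[OF x]] by simp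
    qed
    show "hderiv {a..b} 1 (\<lambda>x. f x + g x) \<in> Dm a b m"
      by (rule Dm_cong[OF IH[THEN conjunct1]]) (use e1 in auto)
  qed
  have "\<forall>k\<le>Suc m. \<forall>x\<in>{a..b}. hderiv {a..b} k (\<lambda>x. f x + g x) x = hderiv {a..b} k f x + hderiv {a..b} k g x"
  proof (intro allI impI ballI)
    fix k x assume k: "k \<le> Suc m" and x: "x \<in> {a..b}"
    show "hderiv {a..b} k (\<lambda>x. f x + g x) x = hderiv {a..b} k f x + hderiv {a..b} k g x"
    proof (cases k)
      case 0 then show ?thesis by simp
    next
      case (Suc k')
      have "hderiv {a..b} k (\<lambda>x. f x + g x) x = hderiv {a..b} k' (hderiv {a..b} 1 (\<lambda>x. f x + g x)) x"
        unfolding Suc H_shift ..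
      also have "\<dots> = hderiv {a..b} k' (\<lambda>x. hderiv {a..b} 1 f x + hderiv {a..b} 1 g x) x"
        by (rule H_cong[OF e1 x])
      also have "\<dots> = hderiv {a..b} k' (hderiv {a..b} 1 f) x + hderiv {a..b} k' (hderiv {a..b} 1 g) x"
        using IH[THEN conjunct2, rule_format, OF _ x, of k'] k Suc by simp
      finally show ?thesis unfolding Suc H_shift .
    qed
  qed
  with mem show ?case by blast
qed

lemma Dm_scale:
  fixes f :: "real \<Rightarrow> 'k::real_normed_field"
  assumes "f \<in> Dm a b m"
  shows "(\<lambda>x. c * f x) \<in> Dm a b m \<and>
    (\<forall>k\<le>m. \<forall>x\<in>{a..b}. hderiv {a..b} k (\<lambda>x. c * f x) x = c * hderiv {a..b} k f x)"
  using assms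
proof (induction m arbitrary: f)
  case 0
  then show ?case by (simp add: Dm_def)
next
  case (Suc m)
  have df: "\<And>x. x \<in> {a..b} \<Longrightarrow> (f has_vector_derivative hderiv {a..b} 1 f x) (at x within {a..b})"
    using Suc.prems Dm_deriv by blast
  have e1: "\<forall>x\<in>{a..b}. hderiv {a..b} 1 (\<lambda>x. c * f x) x = c * hderiv {a..b} 1 f x"
  proof
    fix x assume x: "x \<in> {a..b}"
    show "hderiv {a..b} 1 (\<lambda>x. c * f x) x = c * hderiv {a..b} 1 f x"
      by (rule vd_unique[OF ab x has_vector_derivative_mult_right[OF df[OF x]]])
  qed
  have IH: "(\<lambda>x. c * hderiv {a..b} 1 f x) \<in> Dm a b m \<and>
    (\<forall>k\<le>m. \<forall>x\<in>{a..b}. hderiv {a..b} k (\<lambda>x. c * hderiv {a..b} 1 f x) x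
       = c * hderiv {a..b} k (hderiv {a..b} 1 f) x)"
    using Suc.IH Suc.prems Dm_Suc by blast
  have mem: "(\<lambda>x. c * f x) \<in> Dm a b (Suc m)"
    unfolding Dm_Suc
  proof
    show "\<forall>x\<in>{a..b}. ((\<lambda>x. c * f x) has_vector_derivative hderiv {a..b} 1 (\<lambda>x. c * f x) x) (at x within {a..b})"
    proof
      fix x assume x: "x \<in> {a..b}"
      show "((\<lambda>x. c * f x) has_vector_derivative hderiv {a..b} 1 (\<lambda>x. c * f x) x) (at x within {a..b})"
        using e1 x has_vector_derivative_mult_right[OF df[OF x]] by simp
    qed
    show "hderiv {a..b} 1 (\<lambda>x. c * f x) \<in> Dm a b m"
      by (rule Dm_cong[OF IH[THEN conjunct1]]) (use e1 in auto)
  qed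
  have "\<forall>k\<le>Suc m. \<forall>x\<in>{a..b}. hderiv {a..b} k (\<lambda>x. c * f x) x = c * hderiv {a..b} k f x"
  proof (intro allI impI ballI)
    fix k x assume k: "k \<le> Suc m" and x: "x \<in> {a..b}"
    show "hderiv {a..b} k (\<lambda>x. c * f x) x = c * hderiv {a..b} k f x"
    proof (cases k)
      case 0 then show ?thesis by simp
    next
      case (Suc k')
      have "hderiv {a..b} k (\<lambda>x. c * f x) x = hderiv {a..b} k' (hderiv {a..b} 1 (\<lambda>x. c * f x)) x"
        unfolding Suc H_shift ..
      also have "\<dots> = hderiv {a..b} k' (\<lambda>x. c * hderiv {a..b} 1 f x) x"
        by (rule H_cong[OF e1 x])
      also have "\<dots> = c * hderiv {a..b} k' (hderiv {a..b} 1 f) x"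
        using IH[THEN conjunct2, rule_format, OF _ x, of k'] k Suc by simp
      finally show ?thesis unfolding Suc H_shift .
    qed
  qed
  with mem show ?case by blast
qed

lemma Dm_sum:
  fixes f :: "nat \<Rightarrow> real \<Rightarrow> 'k::real_normed_field"
  assumes "finite A" "\<forall>j\<in>A. f j \<in> Dm a b m"
  shows "(\<lambda>x. \<Sum>j\<in>A. c j * f j x) \<in> Dm a b m \<and>
    (\<forall>k\<le>m. \<forall>x\<in>{a..b}. hderiv {a..b} k (\<lambda>x. \<Sum>j\<in>A. c j * f j x) x = (\<Sum>j\<in>A. c j * hderiv {a..b} k (f j) x))"
  using assms
proof (induction A rule: finite_induct)
  case empty
  have e: "(\<lambda>x. \<Sum>j\<in>{}. c j * f j x) = (\<lambda>x. 0)" by simp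
  have z: "\<And>k y. y \<in> {a..b} \<Longrightarrow> hderiv {a..b} k (\<lambda>x. 0::'k) y = 0" by (rule H_zero)
  show ?case unfolding e using Dm_zero z by simp
next
  case (insert j A)
  have s: "(\<lambda>x. c j * f j x) \<in> Dm a b m \<and>
    (\<forall>k\<le>m. \<forall>x\<in>{a..b}. hderiv {a..b} k (\<lambda>x. c j * f j x) x = c j * hderiv {a..b} k (f j) x)"
    using Dm_scale insert by blast
  have IH: "(\<lambda>x. \<Sum>j\<in>A. c j * f j x) \<in> Dm a b m \<and>
    (\<forall>k\<le>m. \<forall>x\<in>{a..b}. hderiv {a..b} k (\<lambda>x. \<Sum>j\<in>A. c j * f j x) x = (\<Sum>j\<in>A. c j * hderiv {a..b} k (f j) x))"
    using insert by blast
  have ad: "(\<lambda>x. c j * f j x + (\<Sum>j\<in>A. c j * f j x)) \<in> Dm a b m \<and>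
    (\<forall>k\<le>m. \<forall>x\<in>{a..b}. hderiv {a..b} k (\<lambda>x. c j * f j x + (\<Sum>j\<in>A. c j * f j x)) x
      = hderiv {a..b} k (\<lambda>x. c j * f j x) x + hderiv {a..b} k (\<lambda>x. \<Sum>j\<in>A. c j * f j x) x)"
    using Dm_add[of "\<lambda>x. c j * f j x" m "\<lambda>x. \<Sum>j\<in>A. c j * f j x"] s IH by blast
  have e: "(\<lambda>x. \<Sum>j\<in>insert j A. c j * f j x) = (\<lambda>x. c j * f j x + (\<Sum>j\<in>A. c j * f j x))"
    using insert(1,2) by simp
  show ?case unfolding e
  proof
    show "(\<lambda>x. c j * f j x + (\<Sum>j\<in>A. c j * f j x)) \<in> Dm a b m" using ad by blast
    show "\<forall>k\<le>m. \<forall>x\<in>{a..b}. hderiv {a..b} k (\<lambda>x. c j * f j x + (\<Sum>j\<in>A. c j * f j x)) x =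
       (\<Sum>j\<in>insert j A. c j * hderiv {a..b} k (f j) x)"
    proof (intro allI impI ballI)
      fix k x assume k: "k \<le> m" and x: "x \<in> {a..b}"
      have "hderiv {a..b} k (\<lambda>x. c j * f j x + (\<Sum>j\<in>A. c j * f j x)) x
        = hderiv {a..b} k (\<lambda>x. c j * f j x) x + hderiv {a..b} k (\<lambda>x. \<Sum>j\<in>A. c j * f j x) x"
        using ad[THEN conjunct2, rule_format, OF k x] .
      also have "\<dots> = c j * hderiv {a..b} k (f j) x + (\<Sum>j\<in>A. c j * hderiv {a..b} k (f j) x)"
        using s[THEN conjunct2, rule_format, OF k x] IH[THEN conjunct2, rule_format, OF k x] by simp
      also have "\<dots> = (\<Sum>j\<in>insert j A. c j * hderiv {a..b} k (f j) x)"
        using insert(1,2) by simp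
      finally show "hderiv {a..b} k (\<lambda>x. c j * f j x + (\<Sum>j\<in>A. c j * f j x)) x =
       (\<Sum>j\<in>insert j A. c j * hderiv {a..b} k (f j) x)" .
    qed
  qed
qed

end


lemma vd_inverse:
  fixes f :: "real \<Rightarrow> 'k::real_normed_field"
  assumes "(f has_vector_derivative f') (at x within S)" "f x \<noteq> 0"
  shows "((\<lambda>x. inverse (f x)) has_vector_derivative (- (inverse (f x) * f' * inverse (f x)))) (at x within S)"
proof -
  have "((\<lambda>x. inverse (f x)) has_derivative (\<lambda>h. - (inverse (f x) * (h *\<^sub>R f') * inverse (f x)))) (at x within S)"
    using Deriv.has_derivative_inverse[OF assms(2) assms(1)[unfolded has_vector_derivative_def]] .
  moreover have "(\<lambda>h. - (inverse (f x) * (h *\<^sub>R f') * inverse (f x))) = (\<lambda>h. h *\<^sub>R (- (inverse (f x) * f' * inverse (f x))))"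
    by (rule ext) (simp add: scaleR_conv_of_real algebra_simps)
  ultimately show ?thesis unfolding has_vector_derivative_def by simp
qed

context fixes a b :: real assumes ab: "a < b" begin

lemma H1_mult:
  fixes f g :: "real \<Rightarrow> 'k::real_normed_field"
  assumes "f \<in> Dm a b (Suc m)" "g \<in> Dm a b (Suc m)" "x \<in> {a..b}"
  shows "hderiv {a..b} 1 (\<lambda>x. f x * g x) x = f x * hderiv {a..b} 1 g x + hderiv {a..b} 1 f x * g x"
  by (rule vd_unique[OF ab assms(3) has_vector_derivative_mult[OF Dm_deriv[OF assms(1,3)] Dm_deriv[OF assms(2,3)]]])

lemma Dm_mult:
  fixes f g :: "real \<Rightarrow> 'k::real_normed_field"
  assumes "f \<in> Dm a b m" "g \<in> Dm a b m"
  shows "(\<lambda>x. f x * g x) \<in> Dm a b m"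
  using assms
proof (induction m arbitrary: f g)
  case 0
  then show ?case by (simp add: Dm_def)
next
  case (Suc m)
  have e1: "\<forall>x\<in>{a..b}. f x * hderiv {a..b} 1 g x + hderiv {a..b} 1 f x * g x = hderiv {a..b} 1 (\<lambda>x. f x * g x) x"
    using H1_mult[OF Suc.prems] by simp
  have f1: "hderiv {a..b} 1 f \<in> Dm a b m" and g1: "hderiv {a..b} 1 g \<in> Dm a b m"
    using Suc.prems Dm_Suc by blast+
  have f0: "f \<in> Dm a b m" and g0: "g \<in> Dm a b m"
    using Suc.prems Dm_mono le_SucI order_refl by metis+
  have "(\<lambda>x. f x * hderiv {a..b} 1 g x) \<in> Dm a b m" using Suc.IH[OF f0 g1] .
  moreover have "(\<lambda>x. hderiv {a..b} 1 f x * g x) \<in> Dm a b m" using Suc.IH[OF f1 g0] .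
  ultimately have "(\<lambda>x. f x * hderiv {a..b} 1 g x + hderiv {a..b} 1 f x * g x) \<in> Dm a b m"
    using Dm_add[OF ab] by blast
  then have "hderiv {a..b} 1 (\<lambda>x. f x * g x) \<in> Dm a b m"
    by (rule Dm_cong[OF _ e1])
  moreover have "\<forall>x\<in>{a..b}. ((\<lambda>x. f x * g x) has_vector_derivative hderiv {a..b} 1 (\<lambda>x. f x * g x) x) (at x within {a..b})"
  proof
    fix x assume x: "x \<in> {a..b}"
    show "((\<lambda>x. f x * g x) has_vector_derivative hderiv {a..b} 1 (\<lambda>x. f x * g x) x) (at x within {a..b})"
      using has_vector_derivative_mult[OF Dm_deriv[OF Suc.prems(1) x] Dm_deriv[OF Suc.prems(2) x]]
        H1_mult[OF Suc.prems x] by simp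
  qed
  ultimately show ?case unfolding Dm_Suc by blast
qed

lemma Dm_inverse:
  fixes f :: "real \<Rightarrow> 'k::real_normed_field"
  assumes "f \<in> Dm a b m" "\<forall>x\<in>{a..b}. f x \<noteq> 0"
  shows "(\<lambda>x. inverse (f x)) \<in> Dm a b m"
  using assms(1)
proof (induction m)
  case 0
  then show ?case by (simp add: Dm_def)
next
  case (Suc m)
  have d: "\<And>x. x \<in> {a..b} \<Longrightarrow> ((\<lambda>x. inverse (f x)) has_vector_derivative
     (- (inverse (f x) * hderiv {a..b} 1 f x * inverse (f x)))) (at x within {a..b})"
    using vd_inverse Dm_deriv[OF Suc.prems] assms(2) by blast
  have e1: "\<forall>x\<in>{a..b}. (-1) * ((inverse (f x) * hderiv {a..b} 1 f x) * inverse (f x)) = hderiv {a..b} 1 (\<lambda>x. inverse (f x)) x"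
  proof
    fix x assume x: "x \<in> {a..b}"
    show "(-1) * ((inverse (f x) * hderiv {a..b} 1 f x) * inverse (f x)) = hderiv {a..b} 1 (\<lambda>x. inverse (f x)) x"
      using vd_unique[OF ab x d[OF x]] by simp
  qed
  have f1: "hderiv {a..b} 1 f \<in> Dm a b m" using Suc.prems Dm_Suc by blast
  have f0: "f \<in> Dm a b m" using Suc.prems Dm_mono le_SucI order_refl by metis
  have i0: "(\<lambda>x. inverse (f x)) \<in> Dm a b m" using Suc.IH[OF f0] .
  have "(\<lambda>x. inverse (f x) * hderiv {a..b} 1 f x) \<in> Dm a b m" using Dm_mult[OF i0 f1] .
  then have "(\<lambda>x. (inverse (f x) * hderiv {a..b} 1 f x) * inverse (f x)) \<in> Dm a b m"
    using Dm_mult[OF _ i0] by blast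
  then have "(\<lambda>x. (-1) * ((inverse (f x) * hderiv {a..b} 1 f x) * inverse (f x))) \<in> Dm a b m"
    using Dm_scale[OF ab] by blast
  then have "hderiv {a..b} 1 (\<lambda>x. inverse (f x)) \<in> Dm a b m"
    by (rule Dm_cong[OF _ e1])
  moreover have "\<forall>x\<in>{a..b}. ((\<lambda>x. inverse (f x)) has_vector_derivative hderiv {a..b} 1 (\<lambda>x. inverse (f x)) x) (at x within {a..b})"
    using d vd_unique[OF ab _ d] by simp
  ultimately show ?case unfolding Dm_Suc by blast
qed

lemma Dm_divide:
  fixes f g :: "real \<Rightarrow> 'k::real_normed_field"
  assumes "f \<in> Dm a b m" "g \<in> Dm a b m" "\<forall>x\<in>{a..b}. g x \<noteq> 0"
  shows "(\<lambda>x. f x / g x) \<in> Dm a b m"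
proof -
  have "(\<lambda>x. f x * inverse (g x)) \<in> Dm a b m"
    using Dm_mult[OF assms(1) Dm_inverse[OF assms(2,3)]] .
  then show ?thesis by (rule Dm_cong) (simp add: divide_inverse)
qed


lemma prod_order:
  fixes g h :: "real \<Rightarrow> 'k::real_normed_field"
  assumes "c \<in> {a..b}" "g \<in> Dm a b K" "h \<in> Dm a b K" "\<forall>i<K. hderiv {a..b} i g c = 0"
  shows "(\<forall>i<K. hderiv {a..b} i (\<lambda>x. g x * h x) c = 0) \<and>
         hderiv {a..b} K (\<lambda>x. g x * h x) c = hderiv {a..b} K g c * h c"
  using assms(2-4)
proof (induction K arbitrary: g h)
  case 0
  then show ?case by simp
next
  case (Suc K)
  define g1 where "g1 = hderiv {a..b} 1 g"
  define h1 where "h1 = hderiv {a..b} 1 h"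
  have g1D: "g1 \<in> Dm a b K" and h1D: "h1 \<in> Dm a b K"
    using Suc.prems Dm_Suc unfolding g1_def h1_def by blast+
  have gD: "g \<in> Dm a b K" and hD: "h \<in> Dm a b K"
    using Suc.prems Dm_mono le_SucI order_refl by metis+
  have g1z: "\<forall>i<K. hderiv {a..b} i g1 c = 0"
    unfolding g1_def H_shift using Suc.prems(3) by simp
  have gz: "\<forall>i<K. hderiv {a..b} i g c = 0" using Suc.prems(3) by simp
  have IH1: "(\<forall>i<K. hderiv {a..b} i (\<lambda>x. g x * h1 x) c = 0) \<and>
         hderiv {a..b} K (\<lambda>x. g x * h1 x) c = hderiv {a..b} K g c * h1 c"
    using Suc.IH[OF gD h1D gz] .
  have IH2: "(\<forall>i<K. hderiv {a..b} i (\<lambda>x. g1 x * h x) c = 0) \<and>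
         hderiv {a..b} K (\<lambda>x. g1 x * h x) c = hderiv {a..b} K g1 c * h c"
    using Suc.IH[OF g1D hD g1z] .
  have uD: "(\<lambda>x. g x * h1 x) \<in> Dm a b K" using Dm_mult[OF gD h1D] .
  have vD: "(\<lambda>x. g1 x * h x) \<in> Dm a b K" using Dm_mult[OF g1D hD] .
  have e1: "\<forall>x\<in>{a..b}. hderiv {a..b} 1 (\<lambda>x. g x * h x) x = g x * h1 x + g1 x * h x"
    using H1_mult[OF Suc.prems(1,2)] unfolding g1_def h1_def by blast
  have step: "hderiv {a..b} (Suc i) (\<lambda>x. g x * h x) c =
      hderiv {a..b} i (\<lambda>x. g x * h1 x) c + hderiv {a..b} i (\<lambda>x. g1 x * h x) c" if i: "i \<le> K" for i
  proof -
    have "hderiv {a..b} (Suc i) (\<lambda>x. g x * h x) c = hderiv {a..b} i (hderiv {a..b} 1 (\<lambda>x. g x * h x)) c"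
      unfolding H_shift ..
    also have "\<dots> = hderiv {a..b} i (\<lambda>x. g x * h1 x + g1 x * h x) c"
      by (rule H_cong[OF e1 assms(1)])
    also have "\<dots> = hderiv {a..b} i (\<lambda>x. g x * h1 x) c + hderiv {a..b} i (\<lambda>x. g1 x * h x) c"
      using Dm_add[OF ab uD vD] i assms(1) by blast
    finally show ?thesis .
  qed
  have A: "\<forall>i<Suc K. hderiv {a..b} i (\<lambda>x. g x * h x) c = 0"
  proof (intro allI impI)
    fix i assume i: "i < Suc K"
    show "hderiv {a..b} i (\<lambda>x. g x * h x) c = 0"
    proof (cases i)
      case 0
      have "hderiv {a..b} 0 g c = 0" using Suc.prems(3) by blast
      then show ?thesis using 0 by simp
    next
      case (Suc i')
      then show ?thesis using step[of i'] i IH1 IH2 by simp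
    qed
  qed
  have "hderiv {a..b} (Suc K) (\<lambda>x. g x * h x) c = hderiv {a..b} K g c * h1 c + hderiv {a..b} K g1 c * h c"
    using step[of K] IH1 IH2 by simp
  also have "\<dots> = hderiv {a..b} (Suc K) g c * h c"
    using Suc.prems(3) unfolding g1_def H_shift by simp
  finally show ?case using A by blast
qed

lemma quot_order:
  fixes f f0 :: "real \<Rightarrow> 'k::real_normed_field"
  assumes c: "c \<in> {a..b}" and fD: "f \<in> Dm a b K" and f0D: "f0 \<in> Dm a b K"
    and nz: "\<forall>x\<in>{a..b}. f0 x \<noteq> 0" and z: "\<forall>i<K. hderiv {a..b} i f c = 0"
  shows "(\<forall>i<K. hderiv {a..b} i (\<lambda>x. f x / f0 x) c = 0) \<and>
         hderiv {a..b} K (\<lambda>x. f x / f0 x) c = hderiv {a..b} K f c / f0 c"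
proof -
  define g where "g = (\<lambda>x. f x / f0 x)"
  have gD: "g \<in> Dm a b K" unfolding g_def using Dm_divide[OF fD f0D nz] .
  have gf: "\<forall>x\<in>{a..b}. f x = g x * f0 x" unfolding g_def using nz by simp
  have Hf: "\<And>m. hderiv {a..b} m f c = hderiv {a..b} m (\<lambda>x. g x * f0 x) c"
    by (rule H_cong[OF gf c])
  have f0c: "f0 c \<noteq> 0" using nz c by blast
  have claim: "m \<le> K \<Longrightarrow> \<forall>i<m. hderiv {a..b} i g c = 0" for m
  proof (induction m)
    case 0 then show ?case by simp
  next
    case (Suc m)
    then have IH: "\<forall>i<m. hderiv {a..b} i g c = 0" by simp
    have "hderiv {a..b} m (\<lambda>x. g x * f0 x) c = hderiv {a..b} m g c * f0 c"
      using prod_order[OF c Dm_mono[OF gD] Dm_mono[OF f0D] IH] Suc.prems by simp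
    moreover have "hderiv {a..b} m f c = 0" using z Suc.prems by simp
    ultimately have "hderiv {a..b} m g c = 0" using Hf f0c by simp
    then show ?case using IH less_Suc_eq by auto
  qed
  have zg: "\<forall>i<K. hderiv {a..b} i g c = 0" using claim[OF order_refl] .
  have "hderiv {a..b} K (\<lambda>x. g x * f0 x) c = hderiv {a..b} K g c * f0 c"
    using prod_order[OF c gD f0D zg] by simp
  then have "hderiv {a..b} K g c = hderiv {a..b} K f c / f0 c"
    using Hf f0c by (simp add: field_simps)
  then show ?thesis using zg unfolding g_def by simp
qed

end


lemma mat_lem:
  fixes C :: "nat \<Rightarrow> nat \<Rightarrow> 'k::field"
  assumes "finite I" "d < card I"
  shows "\<exists>u. (\<exists>i\<in>I. u i \<noteq> 0) \<and> (\<forall>j<d. (\<Sum>i\<in>I. u i * C i j) = 0)"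
  using assms
proof (induction d arbitrary: I C)
  case 0
  then obtain i where "i \<in> I" by fastforce
  then show ?case by (intro exI[of _ "\<lambda>_. 1"]) auto
next
  case (Suc d)
  show ?case
  proof (cases "\<forall>i\<in>I. C i d = 0")
    case True
    obtain u where u: "\<exists>i\<in>I. u i \<noteq> 0" "\<forall>j<d. (\<Sum>i\<in>I. u i * C i j) = 0"
      using Suc.IH[of I C] Suc.prems by auto
    have "\<forall>j<Suc d. (\<Sum>i\<in>I. u i * C i j) = 0"
      using u(2) True by (auto simp: less_Suc_eq)
    then show ?thesis using u(1) by blast
  next
    case False
    then obtain r where r: "r \<in> I" "C r d \<noteq> 0" by blast
    define I' where "I' = I - {r}"
    define C' where "C' = (\<lambda>i j. C i j - C i d / C r d * C r j)"
    have fI': "finite I'" using Suc.prems unfolding I'_def by simp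
    have cI': "d < card I'" using Suc.prems r unfolding I'_def by simp
    obtain u' where u': "\<exists>i\<in>I'. u' i \<noteq> 0" "\<forall>j<d. (\<Sum>i\<in>I'. u' i * C' i j) = 0"
      using Suc.IH[OF fI' cI', of C'] by blast
    define u where "u = (\<lambda>i. if i = r then - (\<Sum>i\<in>I'. u' i * C i d) / C r d else u' i)"
    have nz: "\<exists>i\<in>I. u i \<noteq> 0" using u'(1) unfolding u_def I'_def by auto
    have key: "(\<Sum>i\<in>I. u i * C i j) = (\<Sum>i\<in>I'. u' i * C' i j)" for j
    proof -
      have "(\<Sum>i\<in>I. u i * C i j) = u r * C r j + (\<Sum>i\<in>I'. u i * C i j)"
        unfolding I'_def using Suc.prems(1) r(1) by (simp add: sum.remove)
      also have "(\<Sum>i\<in>I'. u i * C i j) = (\<Sum>i\<in>I'. u' i * C i j)"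
        unfolding u_def I'_def by (intro sum.cong) auto
      also have "(\<Sum>i\<in>I'. u' i * C' i j) = (\<Sum>i\<in>I'. u' i * C i j) - (\<Sum>i\<in>I'. u' i * C i d) / C r d * C r j"
        unfolding C'_def by (simp add: algebra_simps sum_subtractf sum_distrib_left sum_distrib_right sum_divide_distrib)
      ultimately show ?thesis unfolding u_def by simp
    qed
    have "\<forall>j<Suc d. (\<Sum>i\<in>I. u i * C i j) = 0"
    proof (intro allI impI)
      fix j assume j: "j < Suc d"
      show "(\<Sum>i\<in>I. u i * C i j) = 0"
      proof (cases "j < d")
        case True then show ?thesis using key u'(2) by simp
      next
        case False
        then have "j = d" using j by simp
        then show ?thesis unfolding key C'_def using r(2) by simp
      qed
    qed
    then show ?thesis using nz by blast
  qed
qed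

lemma DEP:
  fixes v w :: "nat \<Rightarrow> real \<Rightarrow> 'k::field"
  assumes "\<forall>i<N. \<forall>x\<in>S. v i x = (\<Sum>j<d. C i j * w j x)" "d < N"
  shows "\<exists>u. (\<exists>i<N. u i \<noteq> 0) \<and> (\<forall>x\<in>S. (\<Sum>i<N. u i * v i x) = 0)"
proof -
  obtain u where u: "\<exists>i\<in>{..<N}. u i \<noteq> 0" "\<forall>j<d. (\<Sum>i\<in>{..<N}. u i * C i j) = 0"
    using mat_lem[of "{..<N}" d C] assms(2) by auto
  have "\<forall>x\<in>S. (\<Sum>i<N. u i * v i x) = 0"
  proof
    fix x assume x: "x \<in> S"
    have "(\<Sum>i<N. u i * v i x) = (\<Sum>i<N. u i * (\<Sum>j<d. C i j * w j x))"
      using assms(1) x by simp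
    also have "\<dots> = (\<Sum>j<d. (\<Sum>i<N. u i * C i j) * w j x)"
      by (simp add: sum_distrib_left sum_distrib_right mult.assoc sum.swap[of _ "{..<N}"])
    also have "\<dots> = 0" using u(2) by simp
    finally show "(\<Sum>i<N. u i * v i x) = 0" .
  qed
  then show ?thesis using u(1) by blast
qed

context fixes a b :: real assumes ab: "a < b" begin

lemma tri:
  fixes v :: "nat \<Rightarrow> real \<Rightarrow> 'k::real_normed_field" and ord :: "nat \<Rightarrow> nat"
  assumes c: "c \<in> {a..b}" and vD: "\<forall>j<N. v j \<in> Dm a b M"
    and ord: "\<forall>j<N. (\<forall>i<ord j. hderiv {a..b} i (v j) c = 0) \<and> hderiv {a..b} (ord j) (v j) c \<noteq> 0"
    and inj: "inj_on ord {..<N}" and K: "K \<le> Suc M"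
    and z: "\<forall>i<K. hderiv {a..b} i (\<lambda>x. \<Sum>j<N. \<beta> j * v j x) c = 0"
  shows "\<forall>j<N. ord j < K \<longrightarrow> \<beta> j = 0"
proof -
  have lin: "\<forall>i\<le>M. hderiv {a..b} i (\<lambda>x. \<Sum>j<N. \<beta> j * v j x) c = (\<Sum>j<N. \<beta> j * hderiv {a..b} i (v j) c)"
    using Dm_sum[OF ab, of "{..<N}" v M \<beta>] vD c by simp
  have "\<forall>j<N. ord j = t \<longrightarrow> t < K \<longrightarrow> \<beta> j = 0" for t
  proof (induction t rule: less_induct)
    case (less t)
    show ?case
    proof (intro allI impI)
      fix j assume j: "j < N" and t: "ord j = t" and tK: "t < K"
      have tM: "t \<le> M" using tK K by simp
      have "0 = (\<Sum>i<N. \<beta> i * hderiv {a..b} t (v i) c)"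
        using z[rule_format, OF tK] lin[rule_format, OF tM] by simp
      also have "\<dots> = \<beta> j * hderiv {a..b} t (v j) c + (\<Sum>i\<in>{..<N} - {j}. \<beta> i * hderiv {a..b} t (v i) c)"
        using j by (simp add: sum.remove)
      also have "(\<Sum>i\<in>{..<N} - {j}. \<beta> i * hderiv {a..b} t (v i) c) = 0"
      proof (rule sum.neutral, rule ballI)
        fix i assume i: "i \<in> {..<N} - {j}"
        then have "ord i \<noteq> t" using inj j t unfolding inj_on_def by auto
        then have "ord i < t \<or> t < ord i" by auto
        then show "\<beta> i * hderiv {a..b} t (v i) c = 0"
        proof
          assume "ord i < t"
          then have "\<beta> i = 0" using less.IH[of "ord i"] i tK by auto
          then show ?thesis by simp
        next
          assume "t < ord i"
          then show ?thesis using ord i by auto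
        qed
      qed
      finally have "\<beta> j * hderiv {a..b} t (v j) c = 0" by simp
      then show "\<beta> j = 0" using ord j t by auto
    qed
  qed
  then show ?thesis by blast
qed

end


lemma part1:
  fixes U :: "(real \<Rightarrow> 'k::real_normed_field) set"
    and p :: "nat \<Rightarrow> real \<Rightarrow> 'k" and f0 :: "real \<Rightarrow> 'k"
    and a b :: real and n :: nat
  assumes ab: "a < b"
    and U: "fun_subspace n a b U" and dimU: "has_dim a b U (n + 1)"
    and p: "bernstein_basis U n a b p"
  shows "\<forall>f\<in>U. \<exists>\<gamma>. \<forall>x\<in>{a..b}. f x = (\<Sum>k<Suc n. \<gamma> k * p k x)"
    and "\<forall>u. (\<forall>x\<in>{a..b}. (\<Sum>k<Suc n. u k * p k x) = 0) \<longrightarrow> (\<forall>k<Suc n. u k = 0)"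
proof -
  have UD: "\<forall>f\<in>U. f \<in> Dm a b n" using U Cm_Dm unfolding fun_subspace_def by blast
  have pk: "\<forall>k\<le>n. p k \<in> U \<and> (\<forall>j<k. hderiv {a..b} j (p k) a = 0) \<and> hderiv {a..b} k (p k) a \<noteq> 0"
    using p unfolding bernstein_basis_def zero_order_def by blast
  show indep: "\<forall>u. (\<forall>x\<in>{a..b}. (\<Sum>k<Suc n. u k * p k x) = 0) \<longrightarrow> (\<forall>k<Suc n. u k = 0)"
  proof (rule allI, rule impI)
    fix u assume z: "\<forall>x\<in>{a..b}. (\<Sum>k<Suc n. u k * p k x) = 0"
    have z': "\<forall>i<Suc n. hderiv {a..b} i (\<lambda>x. \<Sum>k<Suc n. u k * p k x) a = 0"
    proof (intro allI impI)
      fix i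
      have "hderiv {a..b} i (\<lambda>x. \<Sum>k<Suc n. u k * p k x) a = hderiv {a..b} i (\<lambda>x. 0::'k) a"
        by (rule H_cong) (use z ab in auto)
      also have "\<dots> = 0" by (rule H_zero) (use ab in auto)
      finally show "hderiv {a..b} i (\<lambda>x. \<Sum>k<Suc n. u k * p k x) a = 0" .
    qed
    have c: "a \<in> {a..b}" using ab by simp
    have vD: "\<forall>j<Suc n. p j \<in> Dm a b n" using pk UD by auto
    have ord: "\<forall>j<Suc n. (\<forall>i<id j. hderiv {a..b} i (p j) a = 0) \<and> hderiv {a..b} (id j) (p j) a \<noteq> 0"
      using pk by auto
    note tri[OF ab c vD ord inj_on_id order_refl z']
    then show "\<forall>k<Suc n. u k = 0" by simp
  qed
  show "\<forall>f\<in>U. \<exists>\<gamma>. \<forall>x\<in>{a..b}. f x = (\<Sum>k<Suc n. \<gamma> k * p k x)"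
  proof
    fix f assume f: "f \<in> U"
    obtain e where e: "\<forall>g\<in>U. \<exists>c. \<forall>x\<in>{a..b}. g x = (\<Sum>i<n+1. c i * e i x)"
      using dimU unfolding has_dim_def by blast
    define v where "v = (\<lambda>i. if i < Suc n then p i else f)"
    have "\<forall>i. \<exists>c. i < Suc (Suc n) \<longrightarrow> (\<forall>x\<in>{a..b}. v i x = (\<Sum>j<n+1. c j * e j x))"
    proof
      fix i
      have "v i \<in> U" using f pk unfolding v_def by auto
      then show "\<exists>c. i < Suc (Suc n) \<longrightarrow> (\<forall>x\<in>{a..b}. v i x = (\<Sum>j<n+1. c j * e j x))"
        using e by blast
    qed
    from choice[OF this] obtain C where C: "\<forall>i<Suc (Suc n). \<forall>x\<in>{a..b}. v i x = (\<Sum>j<n+1. C i j * e j x)"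
      by blast
    obtain u where u: "\<exists>i<Suc (Suc n). u i \<noteq> 0" "\<forall>x\<in>{a..b}. (\<Sum>i<Suc (Suc n). u i * v i x) = 0"
      using DEP[OF C] by auto
    have s: "\<forall>x\<in>{a..b}. (\<Sum>i<Suc n. u i * p i x) + u (Suc n) * f x = 0"
      using u(2) unfolding v_def by simp
    have un: "u (Suc n) \<noteq> 0"
    proof
      assume "u (Suc n) = 0"
      then have "\<forall>k<Suc n. u k = 0" using indep s by simp
      then show False using u(1) \<open>u (Suc n) = 0\<close> less_Suc_eq by auto
    qed
    have "\<forall>x\<in>{a..b}. f x = (\<Sum>k<Suc n. (- u k / u (Suc n)) * p k x)"
    proof
      fix x assume x: "x \<in> {a..b}"
      have "- (\<Sum>i<Suc n. u i * p i x) = u (Suc n) * f x"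
        using s x neg_eq_iff_add_eq_0 by blast
      then have "f x = - (\<Sum>i<Suc n. u i * p i x) / u (Suc n)"
        using un by (simp add: field_simps)
      also have "\<dots> = (\<Sum>k<Suc n. - (u k * p k x) / u (Suc n))"
        by (simp only: sum_divide_distrib[symmetric] sum_negf)
      also have "\<dots> = (\<Sum>k<Suc n. (- u k / u (Suc n)) * p k x)"
        by (intro sum.cong) auto
      finally show "f x = (\<Sum>k<Suc n. (- u k / u (Suc n)) * p k x)" .
    qed
    then show "\<exists>\<gamma>. \<forall>x\<in>{a..b}. f x = (\<Sum>k<Suc n. \<gamma> k * p k x)"
      by (intro exI[of _ "\<lambda>k. - u k / u (Suc n)"])
  qed
qed



lemma sum_single:
  assumes "finite A" "j \<in> A" "\<forall>i\<in>A-{j}. f i = 0"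
  shows "sum f A = f j"
proof -
  have "sum f A = f j + sum f (A - {j})" using assms by (simp add: sum.remove)
  also have "sum f (A - {j}) = 0" using assms(3) by (rule sum.neutral)
  finally show ?thesis by simp
qed

lemma part2:
  fixes U :: "(real \<Rightarrow> 'k::real_normed_field) set"
    and p q :: "nat \<Rightarrow> real \<Rightarrow> 'k" and f0 :: "real \<Rightarrow> 'k"
    and a b :: real and n :: nat and \<alpha> :: "nat \<Rightarrow> 'k"
  assumes ab: "a < b"
    and U: "fun_subspace n a b U"
    and p: "bernstein_basis U n a b p"
    and f0U: "f0 \<in> U" and nz: "\<forall>x\<in>{a..b}. f0 x \<noteq> 0"
    and q: "n \<ge> 1 \<Longrightarrow> bernstein_basis (Dquot a b f0 U) (n - 1) a b q"
    and span: "\<forall>f\<in>U. \<exists>\<gamma>. \<forall>x\<in>{a..b}. f x = (\<Sum>k<Suc n. \<gamma> k * p k x)"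
    and alpha: "\<forall>x\<in>{a..b}. f0 x = (\<Sum>k<Suc n. \<alpha> k * p k x)"
    and a0: "\<alpha> 0 \<noteq> 0"
    and k: "k < n"
  shows "\<alpha> (Suc k) = - \<alpha> k * (hderiv {a..b} (n - k) (p k) b / (f0 b * hderiv {a..b} (n - 1 - k) (q k) b))
            / (hderiv {a..b} (Suc k) (p (Suc k)) a / (f0 a * hderiv {a..b} k (q k) a))"
proof -
  have aS: "a \<in> {a..b}" and bS: "b \<in> {a..b}" using ab by auto
  have UD: "\<forall>f\<in>U. f \<in> Dm a b n" using U Cm_Dm unfolding fun_subspace_def by blast
  have pk: "\<forall>k\<le>n. p k \<in> U \<and> (\<forall>j<k. hderiv {a..b} j (p k) a = 0) \<and> hderiv {a..b} k (p k) a \<noteq> 0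
     \<and> (\<forall>j<n-k. hderiv {a..b} j (p k) b = 0) \<and> hderiv {a..b} (n-k) (p k) b \<noteq> 0"
    using p unfolding bernstein_basis_def zero_order_def by blast
  have n1: "n \<ge> 1" using k by simp
  have qk: "\<forall>j\<le>n-1. q j \<in> Dquot a b f0 U \<and> (\<forall>i<j. hderiv {a..b} i (q j) a = 0) \<and> hderiv {a..b} j (q j) a \<noteq> 0
     \<and> (\<forall>i<n-1-j. hderiv {a..b} i (q j) b = 0) \<and> hderiv {a..b} (n-1-j) (q j) b \<noteq> 0"
    using q[OF n1] unfolding bernstein_basis_def zero_order_def by blast
  have f0D: "f0 \<in> Dm a b n" using UD f0U by blast
  define g where "g = (\<lambda>j x. p j x / f0 x)"
  define Q where "Q = (\<lambda>j. hderiv {a..b} 1 (g j))"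
  have gD: "\<And>j. j \<le> n \<Longrightarrow> g j \<in> Dm a b n"
    unfolding g_def using Dm_divide[OF ab _ f0D nz] pk UD by blast
  have nS: "n = Suc (n - 1)" using n1 by simp
  have QD: "\<And>j. j \<le> n \<Longrightarrow> Q j \<in> Dm a b (n - 1)"
    unfolding Q_def using gD nS Dm_Suc by metis
  have HQ: "\<And>i j x. hderiv {a..b} i (Q j) x = hderiv {a..b} (Suc i) (g j) x"
    unfolding Q_def H_shift ..
  have ga: "\<And>j. j \<le> n \<Longrightarrow> (\<forall>i<j. hderiv {a..b} i (g j) a = 0) \<and>
      hderiv {a..b} j (g j) a = hderiv {a..b} j (p j) a / f0 a"
  proof -
    fix j assume j: "j \<le> n"
    show "(\<forall>i<j. hderiv {a..b} i (g j) a = 0) \<and> hderiv {a..b} j (g j) a = hderiv {a..b} j (p j) a / f0 a"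
      unfolding g_def
      using quot_order[OF ab aS Dm_mono[of "p j" a b n j] Dm_mono[OF f0D, of j] nz] pk UD j by auto
  qed
  have gb: "\<And>j. j \<le> n \<Longrightarrow> (\<forall>i<n-j. hderiv {a..b} i (g j) b = 0) \<and>
      hderiv {a..b} (n-j) (g j) b = hderiv {a..b} (n-j) (p j) b / f0 b"
  proof -
    fix j assume j: "j \<le> n"
    show "(\<forall>i<n-j. hderiv {a..b} i (g j) b = 0) \<and> hderiv {a..b} (n-j) (g j) b = hderiv {a..b} (n-j) (p j) b / f0 b"
      unfolding g_def
      using quot_order[OF ab bS Dm_mono[of "p j" a b n "n-j"] Dm_mono[OF f0D, of "n-j"] nz] pk UD j by auto
  qed
  have M4: "\<forall>x\<in>{a..b}. (\<Sum>j<Suc n. \<alpha> j * Q j x) = 0"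
  proof
    fix x assume x: "x \<in> {a..b}"
    have L: "(\<lambda>x. \<Sum>j<Suc n. \<alpha> j * g j x) \<in> Dm a b n \<and> (\<forall>k\<le>n. \<forall>x\<in>{a..b}.
       hderiv {a..b} k (\<lambda>x. \<Sum>j<Suc n. \<alpha> j * g j x) x = (\<Sum>j<Suc n. \<alpha> j * hderiv {a..b} k (g j) x))"
      using Dm_sum[OF ab, of "{..<Suc n}" g n \<alpha>] gD by simp
    have one: "\<forall>y\<in>{a..b}. (\<Sum>j<Suc n. \<alpha> j * g j y) = 1"
    proof
      fix y assume y: "y \<in> {a..b}"
      have "(\<Sum>j<Suc n. \<alpha> j * g j y) = (\<Sum>j<Suc n. \<alpha> j * p j y) / f0 y"
        unfolding g_def by (simp add: sum_divide_distrib del: sum.lessThan_Suc)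
      also have "\<dots> = 1" using alpha y nz by simp
      finally show "(\<Sum>j<Suc n. \<alpha> j * g j y) = 1" .
    qed
    have "(\<Sum>j<Suc n. \<alpha> j * Q j x) = hderiv {a..b} 1 (\<lambda>x. \<Sum>j<Suc n. \<alpha> j * g j x) x"
      using L n1 x unfolding Q_def by simp
    also have "\<dots> = hderiv {a..b} 1 (\<lambda>x. 1::'k) x"
      by (rule H_cong[OF one x])
    also have "\<dots> = 0"
      by (rule vd_unique[OF ab x]) simp
    finally show "(\<Sum>j<Suc n. \<alpha> j * Q j x) = 0" .
  qed
  have M4': "\<forall>x\<in>{a..b}. Q 0 x = - (\<Sum>i<n. \<alpha> (Suc i) * Q (Suc i) x) / \<alpha> 0"
  proof
    fix x assume x: "x \<in> {a..b}"
    have "\<alpha> 0 * Q 0 x + (\<Sum>i<n. \<alpha> (Suc i) * Q (Suc i) x) = 0"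
      using M4[rule_format, OF x] by (simp only: sum.lessThan_Suc_shift)
    then have "\<alpha> 0 * Q 0 x = - (\<Sum>i<n. \<alpha> (Suc i) * Q (Suc i) x)"
      by (simp add: eq_neg_iff_add_eq_0)
    then show "Q 0 x = - (\<Sum>i<n. \<alpha> (Suc i) * Q (Suc i) x) / \<alpha> 0"
      using a0 by (simp add: field_simps)
  qed
  have qD: "\<And>j. j \<le> n - 1 \<Longrightarrow> q j \<in> Dm a b (n - 1)"
  proof -
    fix j assume j: "j \<le> n - 1"
    obtain f where f: "f \<in> U" "q j = hderiv {a..b} 1 (\<lambda>x. f x / f0 x)"
      using qk j unfolding Dquot_def by blast
    have "(\<lambda>x. f x / f0 x) \<in> Dm a b (Suc (n - 1))"
      using Dm_divide[OF ab _ f0D nz] f UD nS by metis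
    then show "q j \<in> Dm a b (n - 1)" using f Dm_Suc by metis
  qed
  have M5: "\<forall>j\<le>n-1. \<exists>\<gamma>. \<forall>x\<in>{a..b}. q j x = (\<Sum>i<n. \<gamma> i * Q (Suc i) x)"
  proof (intro allI impI)
    fix j assume j: "j \<le> n - 1"
    obtain f where f: "f \<in> U" "q j = hderiv {a..b} 1 (\<lambda>x. f x / f0 x)"
      using qk j unfolding Dquot_def by blast
    obtain \<beta> where \<beta>: "\<forall>x\<in>{a..b}. f x = (\<Sum>k<Suc n. \<beta> k * p k x)"
      using span f by blast
    have L: "(\<lambda>x. \<Sum>j<Suc n. \<beta> j * g j x) \<in> Dm a b n \<and> (\<forall>k\<le>n. \<forall>x\<in>{a..b}.
       hderiv {a..b} k (\<lambda>x. \<Sum>j<Suc n. \<beta> j * g j x) x = (\<Sum>j<Suc n. \<beta> j * hderiv {a..b} k (g j) x))"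
      using Dm_sum[OF ab, of "{..<Suc n}" g n \<beta>] gD by simp
    have fe: "\<forall>y\<in>{a..b}. f y / f0 y = (\<Sum>j<Suc n. \<beta> j * g j y)"
      using \<beta> unfolding g_def by (simp add: sum_divide_distrib del: sum.lessThan_Suc)
    have "\<forall>x\<in>{a..b}. q j x = (\<Sum>i<n. (\<beta> (Suc i) - \<beta> 0 * \<alpha> (Suc i) / \<alpha> 0) * Q (Suc i) x)"
    proof
      fix x assume x: "x \<in> {a..b}"
      have "q j x = hderiv {a..b} 1 (\<lambda>x. \<Sum>j<Suc n. \<beta> j * g j x) x"
        unfolding f(2) by (rule H_cong[OF fe x])
      also have "\<dots> = (\<Sum>j<Suc n. \<beta> j * Q j x)"
        using L n1 x unfolding Q_def by simp
      also have "\<dots> = \<beta> 0 * Q 0 x + (\<Sum>i<n. \<beta> (Suc i) * Q (Suc i) x)"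
        by (simp only: sum.lessThan_Suc_shift)
      also have "\<dots> = (\<Sum>i<n. \<beta> (Suc i) * Q (Suc i) x) - \<beta> 0 / \<alpha> 0 * (\<Sum>i<n. \<alpha> (Suc i) * Q (Suc i) x)"
        using M4' x by simp
      also have "\<dots> = (\<Sum>i<n. (\<beta> (Suc i) - \<beta> 0 * \<alpha> (Suc i) / \<alpha> 0) * Q (Suc i) x)"
        by (simp add: sum_distrib_left sum_subtractf[symmetric] algebra_simps)
      finally show "q j x = (\<Sum>i<n. (\<beta> (Suc i) - \<beta> 0 * \<alpha> (Suc i) / \<alpha> 0) * Q (Suc i) x)" .
    qed
    then show "\<exists>\<gamma>. \<forall>x\<in>{a..b}. q j x = (\<Sum>i<n. \<gamma> i * Q (Suc i) x)"
      by (intro exI[of _ "\<lambda>i. \<beta> (Suc i) - \<beta> 0 * \<alpha> (Suc i) / \<alpha> 0"])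
  qed
  have qindep: "\<forall>u. (\<forall>x\<in>{a..b}. (\<Sum>j<n. u j * q j x) = 0) \<longrightarrow> (\<forall>j<n. u j = 0)"
  proof (rule allI, rule impI)
    fix u assume z: "\<forall>x\<in>{a..b}. (\<Sum>j<n. u j * q j x) = 0"
    have z': "\<forall>i<n. hderiv {a..b} i (\<lambda>x. \<Sum>j<n. u j * q j x) a = 0"
    proof (intro allI impI)
      fix i
      have "hderiv {a..b} i (\<lambda>x. \<Sum>j<n. u j * q j x) a = hderiv {a..b} i (\<lambda>x. 0::'k) a"
        by (rule H_cong) (use z aS in auto)
      also have "\<dots> = 0" by (rule H_zero[OF ab aS])
      finally show "hderiv {a..b} i (\<lambda>x. \<Sum>j<n. u j * q j x) a = 0" .
    qed
    have vD: "\<forall>j<n. q j \<in> Dm a b (n - 1)" using qD by simp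
    have ord: "\<forall>j<n. (\<forall>i<id j. hderiv {a..b} i (q j) a = 0) \<and> hderiv {a..b} (id j) (q j) a \<noteq> 0"
      using qk by auto
    have K: "n \<le> Suc (n - 1)" by simp
    note tri[OF ab aS vD ord inj_on_id K z']
    then show "\<forall>j<n. u j = 0" by simp
  qed
  define ch where "ch = (\<lambda>i. if k \<le> i then - \<alpha> (Suc i) else 0)"
  define h where "h = (\<lambda>x. \<Sum>i<n. ch i * Q (Suc i) x)"
  define ch' where "ch' = (\<lambda>i. if i \<le> k then \<alpha> i else 0)"
  define h' where "h' = (\<lambda>x. \<Sum>i<Suc n. ch' i * Q i x)"
  have hh': "\<forall>x\<in>{a..b}. h x = h' x"
  proof
    fix x assume x: "x \<in> {a..b}"
    have E1: "h' x = ch' 0 * Q 0 x + (\<Sum>i<n. ch' (Suc i) * Q (Suc i) x)"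
      unfolding h'_def by (simp only: sum.lessThan_Suc_shift)
    have E2: "h x = - (\<Sum>i<n. (if k \<le> i then \<alpha> (Suc i) else 0) * Q (Suc i) x)"
      unfolding h_def ch_def sum_negf[symmetric] by (intro sum.cong) auto
    have E3: "ch' 0 * Q 0 x + (\<Sum>i<n. ch' (Suc i) * Q (Suc i) x) + (\<Sum>i<n. (if k \<le> i then \<alpha> (Suc i) else 0) * Q (Suc i) x)
        = \<alpha> 0 * Q 0 x + (\<Sum>i<n. \<alpha> (Suc i) * Q (Suc i) x)"
    proof -
      have "(\<Sum>i<n. ch' (Suc i) * Q (Suc i) x) + (\<Sum>i<n. (if k \<le> i then \<alpha> (Suc i) else 0) * Q (Suc i) x)
         = (\<Sum>i<n. \<alpha> (Suc i) * Q (Suc i) x)"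
        unfolding sum.distrib[symmetric] ch'_def by (intro sum.cong) auto
      then show ?thesis unfolding ch'_def by (simp add: add.assoc)
    qed
    have E4: "\<alpha> 0 * Q 0 x + (\<Sum>i<n. \<alpha> (Suc i) * Q (Suc i) x) = 0"
      using M4[rule_format, OF x] by (simp only: sum.lessThan_Suc_shift)
    have "h' x = - (\<Sum>i<n. (if k \<le> i then \<alpha> (Suc i) else 0) * Q (Suc i) x)"
      unfolding E1 eq_neg_iff_add_eq_0 E3 E4 ..
    then show "h x = h' x" unfolding E2 by simp
  qed
  have QsD: "\<forall>i\<in>{..<n}. Q (Suc i) \<in> Dm a b (n - 1)" using QD by simp
  have hL: "\<forall>t\<le>n-1. \<forall>x\<in>{a..b}. hderiv {a..b} t h x = (\<Sum>i<n. ch i * hderiv {a..b} (Suc t) (g (Suc i)) x)"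
    using Dm_sum[OF ab, of "{..<n}" "\<lambda>i. Q (Suc i)" "n - 1" ch] QsD unfolding h_def HQ by simp
  have Q'D: "\<forall>i\<in>{..<Suc n}. Q i \<in> Dm a b (n - 1)" using QD by simp
  have h'L: "\<forall>t\<le>n-1. \<forall>x\<in>{a..b}. hderiv {a..b} t h' x = (\<Sum>i<Suc n. ch' i * hderiv {a..b} (Suc t) (g i) x)"
    using Dm_sum[OF ab, of "{..<Suc n}" Q "n - 1" ch'] Q'D unfolding h'_def HQ by simp
  have Ha0: "\<forall>t<k. hderiv {a..b} t h a = 0"
  proof (intro allI impI)
    fix t assume t: "t < k"
    have "hderiv {a..b} t h a = (\<Sum>i<n. ch i * hderiv {a..b} (Suc t) (g (Suc i)) a)"
      using hL t k aS by simp
    also have "\<dots> = 0"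
    proof (rule sum.neutral, rule ballI)
      fix i assume i: "i \<in> {..<n}"
      show "ch i * hderiv {a..b} (Suc t) (g (Suc i)) a = 0"
      proof (cases "k \<le> i")
        case True
        then have "hderiv {a..b} (Suc t) (g (Suc i)) a = 0" using ga[of "Suc i"] i t by auto
        then show ?thesis by simp
      qed (simp add: ch_def)
    qed
    finally show "hderiv {a..b} t h a = 0" .
  qed
  have Hak: "hderiv {a..b} k h a = - \<alpha> (Suc k) * (hderiv {a..b} (Suc k) (p (Suc k)) a / f0 a)"
  proof -
    have "hderiv {a..b} k h a = (\<Sum>i<n. ch i * hderiv {a..b} (Suc k) (g (Suc i)) a)"
      using hL k aS by simp
    also have "\<dots> = ch k * hderiv {a..b} (Suc k) (g (Suc k)) a"
    proof (rule sum_single)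
      show "\<forall>i\<in>{..<n} - {k}. ch i * hderiv {a..b} (Suc k) (g (Suc i)) a = 0"
      proof
        fix i assume i: "i \<in> {..<n} - {k}"
        show "ch i * hderiv {a..b} (Suc k) (g (Suc i)) a = 0"
        proof (cases "k \<le> i")
          case True
          then have "hderiv {a..b} (Suc k) (g (Suc i)) a = 0" using ga[of "Suc i"] i by auto
          then show ?thesis by simp
        qed (simp add: ch_def)
      qed
    qed (use k in auto)
    also have "\<dots> = - \<alpha> (Suc k) * (hderiv {a..b} (Suc k) (p (Suc k)) a / f0 a)"
      using ga[of "Suc k"] k unfolding ch_def by simp
    finally show ?thesis .
  qed
  have Hb0: "\<forall>t<n-1-k. hderiv {a..b} t h' b = 0"
  proof (intro allI impI)
    fix t assume t: "t < n - 1 - k"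
    have "hderiv {a..b} t h' b = (\<Sum>i<Suc n. ch' i * hderiv {a..b} (Suc t) (g i) b)"
      using h'L t k bS by simp
    also have "\<dots> = 0"
    proof (rule sum.neutral, rule ballI)
      fix i assume i: "i \<in> {..<Suc n}"
      show "ch' i * hderiv {a..b} (Suc t) (g i) b = 0"
      proof (cases "i \<le> k")
        case True
        then have "hderiv {a..b} (Suc t) (g i) b = 0" using gb[of i] i t k by auto
        then show ?thesis by simp
      qed (simp add: ch'_def)
    qed
    finally show "hderiv {a..b} t h' b = 0" .
  qed
  have Hbk: "hderiv {a..b} (n-1-k) h' b = \<alpha> k * (hderiv {a..b} (n - k) (p k) b / f0 b)"
  proof -
    have "hderiv {a..b} (n-1-k) h' b = (\<Sum>i<Suc n. ch' i * hderiv {a..b} (Suc (n-1-k)) (g i) b)"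
      using h'L k bS by simp
    also have "\<dots> = ch' k * hderiv {a..b} (Suc (n-1-k)) (g k) b"
    proof (rule sum_single)
      show "\<forall>i\<in>{..<Suc n} - {k}. ch' i * hderiv {a..b} (Suc (n-1-k)) (g i) b = 0"
      proof
        fix i assume i: "i \<in> {..<Suc n} - {k}"
        show "ch' i * hderiv {a..b} (Suc (n-1-k)) (g i) b = 0"
        proof (cases "i \<le> k")
          case True
          then have "hderiv {a..b} (Suc (n-1-k)) (g i) b = 0" using gb[of i] i k by auto
          then show ?thesis by simp
        qed (simp add: ch'_def)
      qed
    qed (use k in auto)
    also have "\<dots> = \<alpha> k * (hderiv {a..b} (n - k) (p k) b / f0 b)"
      using gb[of k] k unfolding ch'_def by (simp add: Suc_diff_Suc)
    finally show ?thesis .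
  qed
  define v where "v = (\<lambda>i. if i < n then q i else h)"
  have "\<forall>i. \<exists>c. i < Suc n \<longrightarrow> (\<forall>x\<in>{a..b}. v i x = (\<Sum>j<n. c j * Q (Suc j) x))"
  proof
    fix i
    show "\<exists>c. i < Suc n \<longrightarrow> (\<forall>x\<in>{a..b}. v i x = (\<Sum>j<n. c j * Q (Suc j) x))"
    proof (cases "i < n")
      case True
      then show ?thesis using M5 unfolding v_def by auto
    next
      case False
      then show ?thesis unfolding v_def h_def by auto
    qed
  qed
  from choice[OF this] obtain C where C: "\<forall>i<Suc n. \<forall>x\<in>{a..b}. v i x = (\<Sum>j<n. C i j * Q (Suc j) x)"
    by blast
  obtain u where u: "\<exists>i<Suc n. u i \<noteq> 0" "\<forall>x\<in>{a..b}. (\<Sum>i<Suc n. u i * v i x) = 0"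
    using DEP[OF C] by auto
  have s: "\<forall>x\<in>{a..b}. (\<Sum>i<n. u i * q i x) + u n * h x = 0"
    using u(2) unfolding v_def by simp
  have un: "u n \<noteq> 0"
  proof
    assume "u n = 0"
    then have "\<forall>j<n. u j = 0" using qindep s by simp
    then show False using u(1) \<open>u n = 0\<close> less_Suc_eq by auto
  qed
  define \<beta> where "\<beta> = (\<lambda>i. - u i / u n)"
  define G where "G = (\<lambda>x. \<Sum>i<n. \<beta> i * q i x)"
  have hG: "\<forall>x\<in>{a..b}. G x = h x"
  proof
    fix x assume x: "x \<in> {a..b}"
    have "- (\<Sum>i<n. u i * q i x) = u n * h x"
      using s x neg_eq_iff_add_eq_0 by blast
    then have "h x = - (\<Sum>i<n. u i * q i x) / u n"
      using un by (simp add: field_simps)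
    also have "\<dots> = (\<Sum>i<n. - (u i * q i x) / u n)"
      by (simp only: sum_divide_distrib[symmetric] sum_negf)
    also have "\<dots> = G x"
      unfolding G_def \<beta>_def by (intro sum.cong) auto
    finally show "G x = h x" by simp
  qed
  have vD: "\<forall>j<n. q j \<in> Dm a b (n - 1)" using qD by simp
  have Kn: "k \<le> Suc (n - 1)" using k by simp
  have zGa: "\<forall>t<k. hderiv {a..b} t (\<lambda>x. \<Sum>i<n. \<beta> i * q i x) a = 0"
  proof (intro allI impI)
    fix t assume t: "t < k"
    have "hderiv {a..b} t (\<lambda>x. \<Sum>i<n. \<beta> i * q i x) a = hderiv {a..b} t h a"
      using H_cong[OF hG aS] unfolding G_def .
    then show "hderiv {a..b} t (\<lambda>x. \<Sum>i<n. \<beta> i * q i x) a = 0" using Ha0 t by simp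
  qed
  have orda: "\<forall>j<n. (\<forall>i<id j. hderiv {a..b} i (q j) a = 0) \<and> hderiv {a..b} (id j) (q j) a \<noteq> 0"
    using qk by auto
  have B1: "\<forall>j<n. id j < k \<longrightarrow> \<beta> j = 0"
    by (rule tri[OF ab aS vD orda inj_on_id Kn zGa])
  have zGb: "\<forall>t<n-1-k. hderiv {a..b} t (\<lambda>x. \<Sum>i<n. \<beta> i * q i x) b = 0"
  proof (intro allI impI)
    fix t assume t: "t < n - 1 - k"
    have "hderiv {a..b} t (\<lambda>x. \<Sum>i<n. \<beta> i * q i x) b = hderiv {a..b} t h b"
      using H_cong[OF hG bS] unfolding G_def .
    also have "\<dots> = hderiv {a..b} t h' b" using H_cong[OF hh' bS] .
    finally show "hderiv {a..b} t (\<lambda>x. \<Sum>i<n. \<beta> i * q i x) b = 0" using Hb0 t by simp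
  qed
  have ordb: "\<forall>j<n. (\<forall>i<(\<lambda>j. n - 1 - j) j. hderiv {a..b} i (q j) b = 0) \<and> hderiv {a..b} ((\<lambda>j. n - 1 - j) j) (q j) b \<noteq> 0"
    using qk by auto
  have injb: "inj_on (\<lambda>j. n - 1 - j) {..<n}" unfolding inj_on_def by auto
  have Kb: "n - 1 - k \<le> Suc (n - 1)" by simp
  have B2: "\<forall>j<n. (\<lambda>j. n - 1 - j) j < n - 1 - k \<longrightarrow> \<beta> j = 0"
    by (rule tri[OF ab bS vD ordb injb Kb zGb])
  have Gk: "\<forall>x\<in>{a..b}. h x = \<beta> k * q k x"
  proof
    fix x assume x: "x \<in> {a..b}"
    have "G x = \<beta> k * q k x"
      unfolding G_def
    proof (rule sum_single)
      show "\<forall>i\<in>{..<n} - {k}. \<beta> i * q i x = 0"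
      proof
        fix i assume i: "i \<in> {..<n} - {k}"
        then have "i < k \<or> k < i" by auto
        then have "\<beta> i = 0" using B1 B2 i k by auto
        then show "\<beta> i * q i x = 0" by simp
      qed
    qed (use k in auto)
    then show "h x = \<beta> k * q k x" using hG x by simp
  qed
  have qkD: "q k \<in> Dm a b (n - 1)" using qD k by simp
  have Ea: "hderiv {a..b} k h a = \<beta> k * hderiv {a..b} k (q k) a"
  proof -
    have "hderiv {a..b} k h a = hderiv {a..b} k (\<lambda>x. \<beta> k * q k x) a"
      by (rule H_cong[OF Gk aS])
    also have "\<dots> = \<beta> k * hderiv {a..b} k (q k) a"
      using Dm_scale[OF ab qkD, of "\<beta> k"] k aS by simp
    finally show ?thesis .
  qed
  have Eb: "hderiv {a..b} (n-1-k) h' b = \<beta> k * hderiv {a..b} (n-1-k) (q k) b"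
  proof -
    have Gk': "\<forall>x\<in>{a..b}. h' x = \<beta> k * q k x" using Gk hh' by simp
    have "hderiv {a..b} (n-1-k) h' b = hderiv {a..b} (n-1-k) (\<lambda>x. \<beta> k * q k x) b"
      by (rule H_cong[OF Gk' bS])
    also have "\<dots> = \<beta> k * hderiv {a..b} (n-1-k) (q k) b"
      using Dm_scale[OF ab qkD, of "\<beta> k"] k bS by simp
    finally show ?thesis .
  qed
  have nza: "hderiv {a..b} k (q k) a \<noteq> 0" and nzb: "hderiv {a..b} (n-1-k) (q k) b \<noteq> 0"
    using qk k by auto
  have nzp: "hderiv {a..b} (Suc k) (p (Suc k)) a \<noteq> 0" using pk k by auto
  have f0a: "f0 a \<noteq> 0" and f0b: "f0 b \<noteq> 0" using nz aS bS by auto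
  have X1: "- \<alpha> (Suc k) * (hderiv {a..b} (Suc k) (p (Suc k)) a / f0 a) = \<beta> k * hderiv {a..b} k (q k) a"
    using Hak Ea by simp
  have X2: "\<alpha> k * (hderiv {a..b} (n - k) (p k) b / f0 b) = \<beta> k * hderiv {a..b} (n-1-k) (q k) b"
    using Hbk Eb by simp
  have bk: "\<beta> k = \<alpha> k * (hderiv {a..b} (n - k) (p k) b / (f0 b * hderiv {a..b} (n-1-k) (q k) b))"
    using X2 nzb f0b by (simp add: field_simps)
  have ak: "\<alpha> (Suc k) = - \<beta> k / (hderiv {a..b} (Suc k) (p (Suc k)) a / (f0 a * hderiv {a..b} k (q k) a))"
    using X1 nza nzp f0a apply (simp add: field_simps)
    by (metis minus_minus)
  show ?thesis unfolding ak bk by simp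
qed


theorem theorem4:
  fixes U :: "(real \<Rightarrow> 'k::real_normed_field) set"
    and p q :: "nat \<Rightarrow> real \<Rightarrow> 'k" and f0 :: "real \<Rightarrow> 'k"
    and a b :: real and n :: nat
  assumes ab: "a < b"
    and U: "fun_subspace n a b U" and dimU: "has_dim a b U (n + 1)"
    and p: "bernstein_basis U n a b p"
    and f0U: "f0 \<in> U" and f0pos: "\<forall>x\<in>{a..b}. \<exists>r>0. f0 x = of_real r"
    and q: "n \<ge> 1 \<Longrightarrow> bernstein_basis (Dquot a b f0 U) (n - 1) a b q"
  shows "\<forall>x\<in>{a..b}.
    (let c = (\<lambda>k. hderiv {a..b} k (p k) a / (f0 a * hderiv {a..b} (k - 1) (q (k - 1)) a));
         d = (\<lambda>k. hderiv {a..b} (n - k) (p k) b / (f0 b * hderiv {a..b} (n - 1 - k) (q k) b))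
     in f0 x = f0 a / p 0 a * p 0 x
        + (\<Sum>k=1..n. (-1) ^ k * ((\<Prod>i<k. d i) / (\<Prod>i=1..k. c i)) * (f0 a / p 0 a) * p k x))"
proof -
  have aS: "a \<in> {a..b}" using ab by auto
  have nz: "\<forall>x\<in>{a..b}. f0 x \<noteq> 0"
  proof
    fix x assume "x \<in> {a..b}"
    then obtain r where "r > 0" "f0 x = of_real r" using f0pos by blast
    then show "f0 x \<noteq> 0" by simp
  qed
  note P1 = part1[OF ab U dimU p]
  obtain \<alpha> where alpha: "\<forall>x\<in>{a..b}. f0 x = (\<Sum>k<Suc n. \<alpha> k * p k x)"
    using P1(1) f0U by blast
  have pk: "\<forall>k\<le>n. (\<forall>j<k. hderiv {a..b} j (p k) a = 0) \<and> hderiv {a..b} k (p k) a \<noteq> 0"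
    using p unfolding bernstein_basis_def zero_order_def by blast
  have p0a: "p 0 a \<noteq> 0" using pk by fastforce
  have pa: "\<forall>i<n. p (Suc i) a = 0"
  proof (intro allI impI)
    fix i assume "i < n"
    then have "Suc i \<le> n" by simp
    then have "\<forall>j<Suc i. hderiv {a..b} j (p (Suc i)) a = 0" using pk by blast
    then have "hderiv {a..b} 0 (p (Suc i)) a = 0" by blast
    then show "p (Suc i) a = 0" by simp
  qed
  have "f0 a = \<alpha> 0 * p 0 a + (\<Sum>i<n. \<alpha> (Suc i) * p (Suc i) a)"
    using alpha[rule_format, OF aS] by (simp only: sum.lessThan_Suc_shift)
  also have "(\<Sum>i<n. \<alpha> (Suc i) * p (Suc i) a) = 0" using pa by simp
  finally have a0e: "\<alpha> 0 = f0 a / p 0 a" using p0a by (simp add: field_simps)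
  have a0: "\<alpha> 0 \<noteq> 0" using a0e nz aS p0a by simp
  define c where "c = (\<lambda>k. hderiv {a..b} k (p k) a / (f0 a * hderiv {a..b} (k - 1) (q (k - 1)) a))"
  define d where "d = (\<lambda>k. hderiv {a..b} (n - k) (p k) b / (f0 b * hderiv {a..b} (n - 1 - k) (q k) b))"
  have rec: "\<forall>k<n. \<alpha> (Suc k) = - \<alpha> k * d k / c (Suc k)"
  proof (intro allI impI)
    fix k assume k: "k < n"
    show "\<alpha> (Suc k) = - \<alpha> k * d k / c (Suc k)"
      using part2[OF ab U p f0U nz q P1(1) alpha a0 k] unfolding c_def d_def by simp
  qed
  have form: "k \<le> n \<Longrightarrow> \<alpha> k = (-1) ^ k * ((\<Prod>i<k. d i) / (\<Prod>i=1..k. c i)) * (f0 a / p 0 a)" for k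
  proof (induction k)
    case 0 then show ?case using a0e by simp
  next
    case (Suc k)
    then have IH: "\<alpha> k = (-1) ^ k * ((\<Prod>i<k. d i) / (\<Prod>i=1..k. c i)) * (f0 a / p 0 a)" by simp
    have "\<alpha> (Suc k) = - \<alpha> k * d k / c (Suc k)" using rec Suc.prems by simp
    also have "\<dots> = (-1) ^ Suc k * ((\<Prod>i<Suc k. d i) / (\<Prod>i=1..Suc k. c i)) * (f0 a / p 0 a)"
      unfolding IH prod.lessThan_Suc prod.nat_ivl_Suc'[of 1 k] by (simp add: ac_simps)
    finally show ?case .
  qed
  show ?thesis unfolding Let_def c_def[symmetric] d_def[symmetric]
  proof
    fix x assume x: "x \<in> {a..b}"
    have "f0 x = \<alpha> 0 * p 0 x + (\<Sum>i<n. \<alpha> (Suc i) * p (Suc i) x)"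
      using alpha[rule_format, OF x] by (simp only: sum.lessThan_Suc_shift)
    also have "(\<Sum>i<n. \<alpha> (Suc i) * p (Suc i) x) = (\<Sum>k=1..n. \<alpha> k * p k x)"
      by (simp only: One_nat_def sum.atLeast1_atMost_eq)
    also have "\<dots> = (\<Sum>k=1..n. (-1) ^ k * ((\<Prod>i<k. d i) / (\<Prod>i=1..k. c i)) * (f0 a / p 0 a) * p k x)"
      using form by (intro sum.cong) auto
    finally show "f0 x = f0 a / p 0 a * p 0 x +
      (\<Sum>k=1..n. (-1) ^ k * ((\<Prod>i<k. d i) / (\<Prod>i=1..k. c i)) * (f0 a / p 0 a) * p k x)"
      using a0e by simp
  qed
qed


end
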